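(* Let $K_n(\lambda)$ be defined by $K_0=2$, $K_1=1$, $K_2=\lambda-2$, $K_3=\lambda-3$, $K_{2p+1}=(\lambda-2)K_{2p-1}-K_{2p-3}$ and $K_{2p}=(\lambda-2)K_{2p-2}-K_{2p-4}$ ($p\ge2$), and let $q(\lambda)=\lambda^2-4\lambda$. Then for $p\ge0$: $$K_{2p}(\lambda)=\frac{1}{2^{p-1}}\sum_{i=0}^{\lfloor p/2\rfloor}\binom{p}{2i}(\lambda-2)^{p-2i}q(\lambda)^i,$$ $$K_{2p+1}(\lambda)=\frac{1}{2^{p}}\sum_{i=0}^{\lfloor p/2\rfloor}\binom{p}{2i}(\lambda-2)^{p-2i}q(\lambda)^i+\frac{\lambda-4}{2^{p}}\sum_{i=0}^{\lfloor (p-1)/2\rfloor}\binom{p}{2i+1}(\lambda-2)^{p-2i-1}q(\lambda)^i.$$ *)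

theory Defs
  imports Complex_Main
begin

fun K :: "nat \<Rightarrow> real \<Rightarrow> real" where
  "K 0 x = 2"
| "K (Suc 0) x = 1"
| "K (Suc (Suc 0)) x = x - 2"
| "K (Suc (Suc (Suc 0))) x = x - 3"
| "K (Suc (Suc (Suc (Suc n)))) x = (x - 2) * K (Suc (Suc n)) x - K n x"

definition q :: "real \<Rightarrow> real" where
  "q x = x^2 - 4 * x"

end

theory Submission
  imports Defs
begin

definition AA :: "real \<Rightarrow> nat \<Rightarrow> real" where
  "AA x p = (\<Sum>i\<le>p. real (p choose (2*i)) * (x - 2)^(p - 2*i) * (q x)^i)"
definition BB :: "real \<Rightarrow> nat \<Rightarrow> real" where
  "BB x p = (\<Sum>i\<le>p. real (p choose (2*i+1)) * (x - 2)^(p - 2*i - 1) * (q x)^i)"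

lemma AA_ext: "AA x p = (\<Sum>i\<le>Suc p. real (p choose (2*i)) * (x - 2)^(p - 2*i) * (q x)^i)"
  unfolding AA_def by simp

lemma BB_ext: "BB x p = (\<Sum>i\<le>Suc p. real (p choose (2*i+1)) * (x - 2)^(p - 2*i - 1) * (q x)^i)"
  unfolding BB_def by simp

lemma AA_Suc: "AA x (Suc p) = (x-2) * AA x p + q x * BB x p"
proof -
  let ?a = "x - 2"
  have L: "AA x (Suc p) = ?a^Suc p + (\<Sum>i\<le>p. real (p choose (2*i+1)) * ?a^(p-1-2*i) * (q x)^(i+1))
     + (\<Sum>i\<le>p. real (p choose (2*i+2)) * ?a^(p-1-2*i) * (q x)^(i+1))"
    unfolding AA_def sum.atMost_Suc_shift
    by (simp add: sum.distrib algebra_simps)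
  have R1: "q x * BB x p = (\<Sum>i\<le>p. real (p choose (2*i+1)) * ?a^(p-1-2*i) * (q x)^(i+1))"
    unfolding BB_def sum_distrib_left by (rule sum.cong) (auto simp: algebra_simps)
  have R2: "?a * AA x p = ?a^Suc p + (\<Sum>i\<le>p. real (p choose (2*i+2)) * ?a^(p-1-2*i) * (q x)^(i+1))"
  proof -
    have "?a * AA x p = ?a * (?a^p + (\<Sum>i\<le>p. real (p choose (2*i+2)) * ?a^(p-2*i-2) * (q x)^(i+1)))"
      unfolding AA_ext sum.atMost_Suc_shift by simp
    also have "\<dots> = ?a^Suc p + (\<Sum>i\<le>p. real (p choose (2*i+2)) * ?a^(p-1-2*i) * (q x)^(i+1))"
    proof -
      have "\<And>i. ?a * (real (p choose (2*i+2)) * ?a^(p-2*i-2) * (q x)^(i+1))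
              = real (p choose (2*i+2)) * ?a^(p-1-2*i) * (q x)^(i+1)"
      proof -
        fix i
        show "?a * (real (p choose (2*i+2)) * ?a^(p-2*i-2) * (q x)^(i+1))
              = real (p choose (2*i+2)) * ?a^(p-1-2*i) * (q x)^(i+1)"
        proof (cases "2*i+2 \<le> p")
          case True
          then have "p-1-2*i = Suc (p-2*i-2)" by arith
          then show ?thesis by simp
        qed simp
      qed
      then have "?a * (\<Sum>i\<le>p. real (p choose (2*i+2)) * ?a^(p-2*i-2) * (q x)^(i+1))
          = (\<Sum>i\<le>p. real (p choose (2*i+2)) * ?a^(p-1-2*i) * (q x)^(i+1))"
        unfolding sum_distrib_left by (rule sum.cong[OF refl])
      then show ?thesis by (simp add: distrib_left)
    qed
    finally show ?thesis .
  qed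
  show ?thesis using L R1 R2 by simp
qed

lemma BB_Suc: "BB x (Suc p) = AA x p + (x-2) * BB x p"
proof -
  let ?a = "x - 2"
  have L: "BB x (Suc p) = (\<Sum>i\<le>Suc p. real (p choose (2*i)) * ?a^(p-2*i) * (q x)^i)
     + (\<Sum>i\<le>Suc p. real (p choose (2*i+1)) * ?a^(p-2*i) * (q x)^i)"
    unfolding BB_def by (simp add: sum.distrib algebra_simps)
  have "\<And>i. real (p choose (2*i+1)) * ?a^(p-2*i) * (q x)^i
          = ?a * (real (p choose (2*i+1)) * ?a^(p-2*i-1) * (q x)^i)"
  proof -
    fix i
    show "real (p choose (2*i+1)) * ?a^(p-2*i) * (q x)^i
          = ?a * (real (p choose (2*i+1)) * ?a^(p-2*i-1) * (q x)^i)"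
    proof (cases "2*i+1 \<le> p")
      case True
      then have "p-2*i = Suc (p-2*i-1)" by arith
      then show ?thesis by simp
    qed simp
  qed
  then have "(\<Sum>i\<le>Suc p. real (p choose (2*i+1)) * ?a^(p-2*i) * (q x)^i) = ?a * BB x p"
    unfolding BB_ext sum_distrib_left by (rule sum.cong[OF refl])
  then show ?thesis using L AA_ext by simp
qed

lemma aq: "(x-2)^2 - q x = 4"
  unfolding q_def by (simp add: power2_eq_square algebra_simps)

lemma AA_SS: "AA x (Suc (Suc p)) = 2*(x-2)*AA x (Suc p) - 4 * AA x p"
proof -
  have h1: "AA x (Suc (Suc p)) = (x-2) * AA x (Suc p) + q x * BB x (Suc p)" by (rule AA_Suc)
  have h2: "BB x (Suc p) = AA x p + (x-2) * BB x p" by (rule BB_Suc)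
  have h3: "AA x (Suc p) = (x-2) * AA x p + q x * BB x p" by (rule AA_Suc)
  have h4: "(x-2)^2 = q x + 4" using aq[of x] by simp
  have "AA x (Suc (Suc p)) = (x-2) * AA x (Suc p) + q x * AA x p + (x-2) * (q x * BB x p)"
    unfolding h1 h2 by (simp add: algebra_simps)
  also have "q x * BB x p = AA x (Suc p) - (x-2) * AA x p" using h3 by simp
  finally have "AA x (Suc (Suc p)) = 2*(x-2)*AA x (Suc p) + (q x - (x-2)^2) * AA x p"
    by (simp add: algebra_simps power2_eq_square)
  then show ?thesis unfolding h4 by simp
qed

lemma BB_SS: "BB x (Suc (Suc p)) = 2*(x-2)*BB x (Suc p) - 4 * BB x p"
proof -
  have h2: "BB x (Suc (Suc p)) = AA x (Suc p) + (x-2) * BB x (Suc p)" by (rule BB_Suc)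
  have h3: "AA x (Suc p) = (x-2) * AA x p + q x * BB x p" by (rule AA_Suc)
  have h1: "BB x (Suc p) = AA x p + (x-2) * BB x p" by (rule BB_Suc)
  have h4: "(x-2)^2 = q x + 4" using aq[of x] by simp
  have "BB x (Suc (Suc p)) = 2*(x-2)*(AA x p + (x-2) * BB x p) + (q x - (x-2)^2) * BB x p"
    unfolding h2 h3 h1 by (simp add: algebra_simps power2_eq_square)
  then show ?thesis unfolding h4 h1[symmetric] by (simp add: algebra_simps)
qed

lemma main: "K (2*p) x = 2 * AA x p / 2^p \<and> K (2*p+1) x = AA x p / 2^p + (x-4) * BB x p / 2^p"
proof (induction p rule: nat_less_induct)
  case (1 p)
  show ?case
  proof (cases p)
    case 0 then show ?thesis by (simp add: AA_def BB_def)
  next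
    case (Suc m)
    show ?thesis
    proof (cases m)
      case 0 then show ?thesis using Suc by (simp add: AA_def BB_def q_def eval_nat_numeral field_simps)
    next
      case (Suc n)
      have IH1: "K (2*n) x = 2 * AA x n / 2^n \<and> K (2*n+1) x = AA x n / 2^n + (x-4) * BB x n / 2^n"
        using 1[rule_format, of n] \<open>p = Suc m\<close> Suc by simp
      have IH2: "K (2*Suc n) x = 2 * AA x (Suc n) / 2^Suc n \<and> K (2*Suc n+1) x = AA x (Suc n) / 2^Suc n + (x-4) * BB x (Suc n) / 2^Suc n"
        using 1[rule_format, of "Suc n"] \<open>p = Suc m\<close> Suc by (simp only: lessI)
      have e1: "K (2*p) x = (x-2) * K (2*Suc n) x - K (2*n) x"
        using \<open>p = Suc m\<close> Suc by (simp add: numeral_2_eq_2)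
      have e2: "K (2*p+1) x = (x-2) * K (2*Suc n+1) x - K (2*n+1) x"
        using \<open>p = Suc m\<close> Suc by (simp add: numeral_2_eq_2)
      have pp: "p = Suc (Suc n)" using \<open>p = Suc m\<close> Suc by simp
      obtain a1 a2 where a1: "K (2*n) x = a1" and a2: "K (2*Suc n) x = a2" by blast
      obtain b1 b2 where b1: "K (2*n+1) x = b1" and b2: "K (2*Suc n+1) x = b2" by blast
      have A: "AA x p = 2*(x-2)*AA x (Suc n) - 4 * AA x n" unfolding pp by (rule AA_SS)
      have B: "BB x p = 2*(x-2)*BB x (Suc n) - 4 * BB x n" unfolding pp by (rule BB_SS)
      have P: "(2::real)^p = 4 * 2^n" "(2::real)^Suc n = 2 * 2^n" unfolding pp by simp_all
      have "K (2*p) x = 2 * AA x p / 2^p"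
        unfolding e1 conjunct1[OF IH1] conjunct1[OF IH2] A P
        by (simp add: field_simps)
      moreover have "K (2*p+1) x = AA x p / 2^p + (x-4) * BB x p / 2^p"
        unfolding e2 conjunct2[OF IH1] conjunct2[OF IH2] A B P
        by (simp add: field_simps)
      ultimately show ?thesis ..
    qed
  qed
qed

theorem lemma6:
  fixes x :: real and p :: nat
  shows "(K (2*p) x = (1 / 2 powr (real p - 1)) *
           (\<Sum>i = 0..p div 2. real (p choose (2*i)) * (x - 2)^(p - 2*i) * (q x)^i)) \<and>
         (K (2*p+1) x = (1 / 2^p) *
           (\<Sum>i = 0..p div 2. real (p choose (2*i)) * (x - 2)^(p - 2*i) * (q x)^i)
         + ((x - 4) / 2^p) *
           (\<Sum>i \<in> {i. int (2*i) \<le> int p - 1}. real (p choose (2*i+1)) * (x - 2)^(p - 2*i - 1) * (q x)^i))"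
proof -
  have SA: "(\<Sum>i = 0..p div 2. real (p choose (2*i)) * (x - 2)^(p - 2*i) * (q x)^i) = AA x p"
    unfolding AA_def
    by (rule sum.mono_neutral_left) auto
  have SB: "(\<Sum>i \<in> {i. int (2*i) \<le> int p - 1}. real (p choose (2*i+1)) * (x - 2)^(p - 2*i - 1) * (q x)^i) = BB x p"
    unfolding BB_def
  proof (rule sum.mono_neutral_left)
    show "finite {..p}" by simp
    show "{i. int (2*i) \<le> int p - 1} \<subseteq> {..p}" by auto
    show "\<forall>i\<in>{..p} - {i. int (2*i) \<le> int p - 1}. real (p choose (2*i+1)) * (x - 2)^(p - 2*i - 1) * (q x)^i = 0"
      by auto
  qed
  have P: "1 / 2 powr (real p - 1) = 2 / (2::real)^p"
    by (simp add: powr_diff powr_realpow)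
  show ?thesis unfolding SA SB P using main[of p x] by simp
qed

end
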